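(* Let $\rho$ be a left-c.e. semi-measure. If $X\in2^\omega$ is computable and $X\in\mathsf{W2R}_\rho$, then $\inf_n\rho(X{\upharpoonright}n)>0$.
   Context: $2^{<\omega}$ is the set of finite binary strings, $\varepsilon$ the empty string, $X{\upharpoonright}n$ the first $n$ bits of $X$, $[\![\sigma]\!]=\{X\in2^\omega:\sigma\preceq X\}$, $[\![S]\!]=\bigcup_{\sigma\in S}[\![\sigma]\!]$. A semi-measure is $\rho:2^{<\omega}\to[0,1]$ with $\rho(\varepsilon)=1$ and $\rho(\sigma)\ge\rho(\sigma0)+\rho(\sigma1)$; left-c.e. means its values are uniformly approximable from below by computable non-decreasing rational sequences. For $E\subseteq2^{<\omega}$, $\rho(E)=\sum_{\sigma\in E}\rho(\sigma)$. $X\in\mathsf{W2R}_\rho$ iff $X\notin\bigcap_i[\![U_i]\!]$ for every uniformly c.e. sequence $(U_i)$ of subsets of $2^{<\omega}$ with $\lim_i\rho(U_i)=0$. *)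

theory Defs
  imports "HOL-Analysis.Analysis" "HOL-Library.Nat_Bijection" "HOL-Library.Extended_Nonnegative_Real"
begin

datatype recf = Zf | Sf | Proj nat | Cn recf "recf list" | Pr recf recf | Mn recf

inductive eval :: "recf \<Rightarrow> nat list \<Rightarrow> nat \<Rightarrow> bool" where
  eval_Z: "eval Zf xs 0"
| eval_S: "eval Sf (x # xs) (Suc x)"
| eval_Proj: "i < length xs \<Longrightarrow> eval (Proj i) xs (xs ! i)"
| eval_Cn: "list_all2 (\<lambda>g y. eval g xs y) gs ys \<Longrightarrow> eval f ys z \<Longrightarrow> eval (Cn f gs) xs z"
| eval_Pr0: "eval f xs y \<Longrightarrow> eval (Pr f g) (0 # xs) y"
| eval_PrS: "eval (Pr f g) (n # xs) r \<Longrightarrow> eval g (r # n # xs) y \<Longrightarrow> eval (Pr f g) (Suc n # xs) y"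
| eval_Mn: "eval f (n # xs) 0 \<Longrightarrow> (\<forall>m<n. \<exists>y. eval f (m # xs) y \<and> y \<noteq> 0) \<Longrightarrow> eval (Mn f) xs n"

text \<open>Bijective coding of finite binary strings (False = bit 0, True = bit 1) by naturals.\<close>
fun str_code :: "bool list \<Rightarrow> nat" where
  "str_code [] = 0"
| "str_code (b # s) = 2 * str_code s + (if b then 2 else 1)"

text \<open>Coding of rationals by naturals (surjective onto the rationals).\<close>
definition rat_code :: "nat \<Rightarrow> real" where
  "rat_code n = (case prod_decode n of (a, b) \<Rightarrow> real_of_int (int_decode a) / real (Suc b))"

definition computable_seq :: "(nat \<Rightarrow> bool) \<Rightarrow> bool" where
  "computable_seq X \<longleftrightarrow> (\<exists>c. \<forall>n. eval c [n] (if X n then 1 else 0))"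

definition left_ce :: "(bool list \<Rightarrow> real) \<Rightarrow> bool" where
  "left_ce \<rho> \<longleftrightarrow> (\<exists>c. (\<forall>\<sigma> s. \<exists>y. eval c [str_code \<sigma>, s] y) \<and>
     (\<forall>\<sigma>. let q = (\<lambda>s. rat_code (THE y. eval c [str_code \<sigma>, s] y)) in
            incseq q \<and> q \<longlonglongrightarrow> \<rho> \<sigma>))"

definition uniformly_ce :: "(nat \<Rightarrow> bool list set) \<Rightarrow> bool" where
  "uniformly_ce U \<longleftrightarrow> (\<exists>c. \<forall>i \<sigma>. \<sigma> \<in> U i \<longleftrightarrow> (\<exists>y. eval c [i, str_code \<sigma>] y))"

definition semimeasure :: "(bool list \<Rightarrow> real) \<Rightarrow> bool" where
  "semimeasure \<rho> \<longleftrightarrow> (\<forall>\<sigma>. 0 \<le> \<rho> \<sigma> \<and> \<rho> \<sigma> \<le> 1) \<and> \<rho> [] = 1 \<and>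
     (\<forall>\<sigma>. \<rho> (\<sigma> @ [False]) + \<rho> (\<sigma> @ [True]) \<le> \<rho> \<sigma>)"

definition rho_set :: "(bool list \<Rightarrow> real) \<Rightarrow> bool list set \<Rightarrow> ennreal" where
  "rho_set \<rho> E = infsum (\<lambda>\<sigma>. ennreal (\<rho> \<sigma>)) E"

definition restr :: "(nat \<Rightarrow> bool) \<Rightarrow> nat \<Rightarrow> bool list" where
  "restr X n = map X [0..<n]"

definition cyl :: "bool list \<Rightarrow> (nat \<Rightarrow> bool) set" where
  "cyl \<sigma> = {X. restr X (length \<sigma>) = \<sigma>}"

definition cyl_set :: "bool list set \<Rightarrow> (nat \<Rightarrow> bool) set" where
  "cyl_set S = (\<Union>\<sigma>\<in>S. cyl \<sigma>)"

definition W2R :: "(bool list \<Rightarrow> real) \<Rightarrow> (nat \<Rightarrow> bool) set" where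
  "W2R \<rho> = {X. \<forall>U. uniformly_ce U \<and> (\<lambda>i. rho_set \<rho> (U i)) \<longlonglongrightarrow> 0 \<longrightarrow>
                    X \<notin> (\<Inter>i. cyl_set (U i))}"

end

theory Submission
  imports Defs
begin

lemma list_all2_det:
  "list_all2 (\<lambda>g y. eval g xs y \<and> (\<forall>z. eval g xs z \<longrightarrow> y = z)) gs ys \<Longrightarrow>
   list_all2 (\<lambda>g y. eval g xs y) gs ys' \<Longrightarrow> ys = ys'"
proof (induction gs arbitrary: ys ys')
  case Nil then show ?case by simp
next
  case (Cons g gs)
  then show ?case by (cases ys; cases ys') auto
qed

lemma eval_det: "eval f xs y \<Longrightarrow> eval f xs z \<Longrightarrow> y = z"
proof (induction arbitrary: z rule: eval.induct)
  case (eval_Z xs) from eval_Z.prems show ?case by (cases rule: eval.cases) auto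
next
  case (eval_S x xs) from eval_S.prems show ?case by (cases rule: eval.cases) auto
next
  case (eval_Proj i xs) from eval_Proj.prems show ?case by (cases rule: eval.cases) auto
next
  case (eval_Cn xs gs ys f w)
  from eval_Cn.prems obtain ys' where a: "list_all2 (\<lambda>g y. eval g xs y) gs ys'" "eval f ys' z"
    by (cases rule: eval.cases) auto
  have "ys = ys'" using eval_Cn list_all2_det a(1) by blast
  then show ?case using eval_Cn.IH a(2) by auto
next
  case (eval_Pr0 f xs y g) from eval_Pr0.prems show ?case by (cases rule: eval.cases) (use eval_Pr0.IH in auto)
next
  case (eval_PrS f g n xs r y)
  from eval_PrS.prems show ?case
    by (cases rule: eval.cases) (use eval_PrS.IH in auto)
next
  case (eval_Mn f n xs)
  from eval_Mn.prems obtain n' where n': "z = n'" "eval f (n' # xs) 0"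
     "\<forall>m<n'. \<exists>y. eval f (m # xs) y \<and> y \<noteq> 0"
    by (cases rule: eval.cases) auto
  show ?case
  proof (rule ccontr)
    assume "n \<noteq> z"
    then consider "n < n'" | "n' < n" using n' by linarith
    then show False
    proof cases
      case 1
      then obtain y where "eval f (n # xs) y" "y \<noteq> 0" using n' by auto
      then show False using eval_Mn.IH by auto
    next
      case 2
      then obtain y where "eval f (n' # xs) y" "\<forall>z. eval f (n' # xs) z \<longrightarrow> y = z" "y \<noteq> 0"
        using eval_Mn by blast
      then show False using n' by auto
    qed
  qed
qed

lemma ProjI: "i < length xs \<Longrightarrow> y = xs ! i \<Longrightarrow> eval (Proj i) xs y"
  using eval_Proj by auto
lemma Cn1: "eval g xs y \<Longrightarrow> eval f [y] z \<Longrightarrow> eval (Cn f [g]) xs z"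
  by (rule eval_Cn[of _ _ "[y]"]) auto
lemma Cn2: "eval g1 xs y1 \<Longrightarrow> eval g2 xs y2 \<Longrightarrow> eval f [y1, y2] z \<Longrightarrow> eval (Cn f [g1, g2]) xs z"
  by (rule eval_Cn[of _ _ "[y1, y2]"]) auto
lemma SfI: "y = Suc x \<Longrightarrow> eval Sf (x # xs) y" using eval_S by simp

definition "addf = Pr (Proj 0) (Cn Sf [Proj 0])"
lemma eval_add: "eval addf (a # b # rest) (a + b)"
proof (induction a)
  case 0 then show ?case unfolding addf_def by (auto intro!: eval_Pr0 ProjI)
next
  case (Suc a)
  show ?case unfolding addf_def
    by (rule eval_PrS[OF Suc[unfolded addf_def]]) (auto intro!: Cn1 ProjI SfI)
qed
lemma eval_add2: "z = a + b \<Longrightarrow> eval addf [a, b] z" using eval_add[of a b "[]"] by simp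

definition "multf = Pr Zf (Cn addf [Proj 0, Proj 2])"
lemma eval_mult: "eval multf [a, b] (a * b)"
proof (induction a)
  case 0 then show ?case unfolding multf_def by (auto intro!: eval.intros)
next
  case (Suc a)
  show ?case unfolding multf_def
    by (rule eval_PrS[OF Suc[unfolded multf_def]])
       (rule Cn2[of _ _ "a*b" _ b], auto intro!: ProjI eval_add2)
qed
lemma eval_mult2: "z = a * b \<Longrightarrow> eval multf [a, b] z" using eval_mult by simp

definition "predf = Pr Zf (Proj 1)"
lemma eval_pred: "eval predf [a] (a - 1)"
proof (induction a)
  case 0 then show ?case unfolding predf_def by (auto intro!: eval.intros)
next
  case (Suc a)
  show ?case unfolding predf_def
    by (rule eval_PrS[OF Suc[unfolded predf_def]]) (auto intro!: ProjI)
qed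

definition "tsubf = Pr (Proj 0) (Cn predf [Proj 0])"
lemma eval_tsub: "eval tsubf [a, b] (b - a)"
proof (induction a)
  case 0 then show ?case unfolding tsubf_def by (auto intro!: eval_Pr0 ProjI)
next
  case (Suc a)
  show ?case unfolding tsubf_def
    by (rule eval_PrS[OF Suc[unfolded tsubf_def]])
       (rule Cn1[of _ _ "b - a"], auto intro!: ProjI eval_pred[of "b - a", simplified])
qed

definition "absf = Cn addf [tsubf, Cn tsubf [Proj 1, Proj 0]]"
lemma eval_abs: "eval absf [a, b] ((b - a) + (a - b))"
  unfolding absf_def
  by (rule Cn2[of _ _ "b - a" _ "a - b"]) (auto intro!: eval_tsub eval_add2 Cn2[of _ _ b _ a] ProjI)

definition "pow2f = Pr (Cn Sf [Zf]) (Cn addf [Proj 0, Proj 0])"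
lemma eval_pow2: "eval pow2f [i] (2 ^ i)"
proof (induction i)
  case 0 then show ?case unfolding pow2f_def
    by (auto intro!: eval_Pr0 Cn1[of _ _ 0] eval_Z SfI)
next
  case (Suc i)
  show ?case unfolding pow2f_def
    by (rule eval_PrS[OF Suc[unfolded pow2f_def]])
       (rule Cn2[of _ _ "2^i" _ "2^i"], auto intro!: ProjI eval_add2)
qed

lemma str_code_snoc: "str_code (s @ [b]) = str_code s + 2 ^ length s * (if b then 2 else 1)"
  by (induction s) auto

lemma str_code_inj: "str_code s = str_code t \<Longrightarrow> s = t"
proof (induction s arbitrary: t)
  case Nil then show ?case by (cases t) (auto split: if_splits)
next
  case (Cons a s)
  then show ?case by (cases t) (auto split: if_splits, presburger+)
qed

lemma restr_Suc: "restr X (Suc i) = restr X i @ [X i]"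
  by (simp add: restr_def)

definition "Ff c = Pr Zf (Cn addf [Proj 0, Cn multf [Cn pow2f [Proj 1], Cn Sf [Cn c [Proj 1]]]])"

lemma eval_F:
  assumes c: "\<forall>n. eval c [n] (if X n then 1 else 0)"
  shows "eval (Ff c) [i] (str_code (restr X i))"
proof (induction i)
  case 0 then show ?case unfolding Ff_def by (auto intro!: eval.intros simp: restr_def)
next
  case (Suc i)
  obtain v where v: "v = (if X i then 1 else (0::nat))" by blast
  have cv: "eval c [i] v" using c v by auto
  have e: "str_code (restr X (Suc i)) = str_code (restr X i) + 2 ^ i * Suc v"
    unfolding restr_Suc str_code_snoc v by (simp add: restr_def)
  show ?case unfolding e Ff_def
    apply (rule eval_PrS[OF Suc[unfolded Ff_def]])
    apply (rule Cn2[of _ _ "str_code (restr X i)" _ "2 ^ i * Suc v"])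
      prefer 3 apply (rule eval_add2, simp)
     apply (auto intro!: ProjI)[1]
    apply (rule Cn2[of _ _ "2 ^ i" _ "Suc v"])
      apply (rule Cn1[of _ _ i]) apply (auto intro!: ProjI eval_pow2)[2]
     apply (rule Cn1[of _ _ v])
      apply (rule Cn1[of _ _ i]) apply (auto intro!: ProjI cv SfI eval_mult2)
    done
qed

definition "Gf c = Mn (Cn absf [Cn (Ff c) [Proj 1], Proj 2])"

lemma Gf_iff:
  assumes c: "\<forall>n. eval c [n] (if X n then 1 else 0)"
  shows "(\<exists>y. eval (Gf c) [i, str_code \<sigma>] y) \<longleftrightarrow> \<sigma> = restr X i"
proof -
  have val: "eval (Cn absf [Cn (Ff c) [Proj 1], Proj 2]) [n, i, x]
      ((x - str_code (restr X i)) + (str_code (restr X i) - x))" for n x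
    by (rule Cn2[of _ _ "str_code (restr X i)" _ x])
       (auto intro!: Cn1[of _ _ i] ProjI eval_abs eval_F[OF c])
  show ?thesis
  proof
    assume "\<exists>y. eval (Gf c) [i, str_code \<sigma>] y"
    then obtain y where "eval (Gf c) [i, str_code \<sigma>] y" by blast
    then have "eval (Cn absf [Cn (Ff c) [Proj 1], Proj 2]) [y, i, str_code \<sigma>] 0"
      unfolding Gf_def by (cases rule: eval.cases) auto
    from eval_det[OF this val] have "str_code \<sigma> = str_code (restr X i)" by simp
    then show "\<sigma> = restr X i" by (rule str_code_inj)
  next
    assume "\<sigma> = restr X i"
    then have "eval (Gf c) [i, str_code \<sigma>] 0"
      unfolding Gf_def using val[of 0 "str_code \<sigma>"] by (auto intro!: eval_Mn)
    then show "\<exists>y. eval (Gf c) [i, str_code \<sigma>] y" by blast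
  qed
qed

theorem proposition5p10:
  fixes \<rho> :: "bool list \<Rightarrow> real" and X :: "nat \<Rightarrow> bool"
  assumes "semimeasure \<rho>" and "left_ce \<rho>"
    and "computable_seq X" and "X \<in> W2R \<rho>"
  shows "(INF n. \<rho> (restr X n)) > 0"
proof (rule ccontr)
  assume neg: "\<not> (INF n. \<rho> (restr X n)) > 0"
  define a where "a n = \<rho> (restr X n)" for n
  have nn: "0 \<le> a n" for n using assms(1) unfolding semimeasure_def a_def by auto
  have bdd: "bdd_below (range a)" using nn by (intro bdd_belowI[of _ 0]) auto
  have dec: "a (Suc n) \<le> a n" for n
  proof -
    have "\<rho> (restr X n @ [False]) + \<rho> (restr X n @ [True]) \<le> \<rho> (restr X n)"
      "0 \<le> \<rho> (restr X n @ [False])" "0 \<le> \<rho> (restr X n @ [True])"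
      using assms(1) unfolding semimeasure_def by auto
    then show ?thesis unfolding a_def restr_Suc by (cases "X n") auto
  qed
  have decs: "decseq a" using dec by (simp add: decseq_SucI)
  have lim: "a \<longlonglongrightarrow> 0"
  proof (rule LIMSEQ_I)
    fix r :: real assume r: "0 < r"
    have "(INF n. a n) < r" using neg r unfolding a_def by simp
    then obtain N where N: "a N < r" using cINF_less_iff[of UNIV a r] bdd by auto
    show "\<exists>no. \<forall>n\<ge>no. norm (a n - 0) < r"
    proof (intro exI allI impI)
      fix n assume "N \<le> n"
      then have "a n \<le> a N" using decs by (simp add: decseq_def)
      then show "norm (a n - 0) < r" using N nn[of n] by simp
    qed
  qed
  obtain c where c: "\<forall>n. eval c [n] (if X n then 1 else 0)"
    using assms(3) unfolding computable_seq_def by blast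
  define U where "U i = {restr X i}" for i
  have uce: "uniformly_ce U"
    unfolding uniformly_ce_def U_def using Gf_iff[OF c] by blast
  have rs: "rho_set \<rho> (U i) = ennreal (a i)" for i
    unfolding rho_set_def U_def a_def by simp
  have "(\<lambda>i. rho_set \<rho> (U i)) \<longlonglongrightarrow> 0"
    unfolding rs using lim by (intro tendsto_ennrealI[of _ 0, simplified]) 
  with uce assms(4) have "X \<notin> (\<Inter>i. cyl_set (U i))" unfolding W2R_def by blast
  moreover have "X \<in> (\<Inter>i. cyl_set (U i))"
    unfolding U_def cyl_set_def cyl_def by (simp add: restr_def)
  ultimately show False by blast
qed

end
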